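(* Let $v\ge2$, $n\ge1$, $\epsilon>0$. Let $(Q,\hat P_n)$ and $(Q',\hat P_n')$ be block design schemes with parameters $(v,b,r,k,\lambda,\epsilon)$ and $(v,b',r',k',\lambda',\epsilon)$, respectively. Then the two schemes are marginally equivalent if and only if $k=k'$.
   Context: $\mathcal{X}=\{1,\dots,v\}$; $\Delta_v$ is the set of probability vectors on $\mathcal{X}$. For an incidence structure $(\mathcal{X},\mathcal{Y},\mathcal{I})$ ($\mathcal{I}\subset\mathcal{X}\times\mathcal{Y}$) write $\mathcal{I}_x=\{y:(x,y)\in\mathcal{I}\}$, $\mathcal{I}^y=\{x:(x,y)\in\mathcal{I}\}$. For integers $v>k>0$, $b>r>\lambda\ge0$, a $(v,b,r,k,\lambda)$-block design is an incidence structure with $|\mathcal{X}|=v$, $|\mathcal{Y}|=b$, $|\mathcal{I}_x|=r$ for all $x$, $|\mathcal{I}^y|=k$ for all $y$, $|\mathcal{I}_x\cap\mathcal{I}_{x'}|=\lambda$ for all $x\neq x'$. A block design scheme with parameters $(v,b,r,k,\lambda,\epsilon)$ consists of a $(v,b,r,k,\lambda)$-block design, the mechanism $Q(y|x)=\alpha e^\epsilon$ if $(x,y)\in\mathcal{I}$ and $\alpha$ otherwise, with $\alpha=1/(re^\epsilon+b-r)$, and the estimator $\hat P_{n,x}(Y_1,\dots,Y_n)=\frac{1}{(r-\lambda)(e^\epsilon-1)}\left(\frac{N_x}{n\alpha}-(\lambda e^\epsilon+r-\lambda)\right)$, $N_x=\sum_{i=1}^n\mathbb{1}(Y_i\in\mathcal{I}_x)$.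 Two schemes $(Q,\hat P_n)$, $(Q',\hat P_n')$ (mechanisms with inputs in $\mathcal{X}$) are marginally equivalent if, whenever $X_1,\dots,X_n$ are i.i.d. $\sim P$ and $Y_i\sim Q(\cdot|X_i)$, $Y_i'\sim Q'(\cdot|X_i)$, one has $\hat P_{n,x}(Y_1,\dots,Y_n)\overset{d}{=}\hat P'_{n,x}(Y_1',\dots,Y_n')$ for every $x\in\mathcal{X}$ and every $P\in\Delta_v$. *)

theory Defs
  imports "HOL-Probability.Probability"
begin

definition inc_row :: "('x \<times> 'y) set \<Rightarrow> 'x \<Rightarrow> 'y set" where
  "inc_row I x = {y. (x, y) \<in> I}"

definition inc_col :: "('x \<times> 'y) set \<Rightarrow> 'y \<Rightarrow> 'x set" where
  "inc_col I y = {x. (x, y) \<in> I}"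

definition block_design ::
  "nat \<Rightarrow> nat \<Rightarrow> nat \<Rightarrow> nat \<Rightarrow> nat \<Rightarrow> 'y set \<Rightarrow> (nat \<times> 'y) set \<Rightarrow> bool" where
  "block_design v b r k lam Y I \<longleftrightarrow>
     v > k \<and> k > 0 \<and> b > r \<and> r > lam \<and>
     finite Y \<and> card Y = b \<and> I \<subseteq> {1..v} \<times> Y \<and>
     (\<forall>x\<in>{1..v}. card (inc_row I x) = r) \<and>
     (\<forall>y\<in>Y. card (inc_col I y) = k) \<and>
     (\<forall>x\<in>{1..v}. \<forall>x'\<in>{1..v}. x \<noteq> x' \<longrightarrow> card (inc_row I x \<inter> inc_row I x') = lam)"

definition bd_alpha :: "nat \<Rightarrow> nat \<Rightarrow> real \<Rightarrow> real" where
  "bd_alpha b r eps = 1 / (real r * exp eps + real b - real r)"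

definition bd_mech :: "'y set \<Rightarrow> (nat \<times> 'y) set \<Rightarrow> nat \<Rightarrow> nat \<Rightarrow> real \<Rightarrow> nat \<Rightarrow> 'y pmf" where
  "bd_mech Y I b r eps x =
     embed_pmf (\<lambda>y. if y \<in> Y then (if (x, y) \<in> I then bd_alpha b r eps * exp eps
                                    else bd_alpha b r eps) else 0)"

definition bd_est :: "(nat \<times> 'y) set \<Rightarrow> nat \<Rightarrow> nat \<Rightarrow> nat \<Rightarrow> real \<Rightarrow> nat \<Rightarrow> nat \<Rightarrow> 'y list \<Rightarrow> real" where
  "bd_est I b r lam eps n x ys =
     (1 / ((real r - real lam) * (exp eps - 1))) *
     (real (length (filter (\<lambda>y. y \<in> inc_row I x) ys)) / (real n * bd_alpha b r eps)
        - (real lam * exp eps + real r - real lam))"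

fun iid_list :: "nat \<Rightarrow> 'a pmf \<Rightarrow> 'a list pmf" where
  "iid_list 0 p = return_pmf []"
| "iid_list (Suc n) p = bind_pmf p (\<lambda>a. map_pmf (\<lambda>as. a # as) (iid_list n p))"

definition output_dist :: "nat \<Rightarrow> nat pmf \<Rightarrow> (nat \<Rightarrow> 'y pmf) \<Rightarrow> 'y list pmf" where
  "output_dist n P Q =
     map_pmf (map snd) (iid_list n (bind_pmf P (\<lambda>x. map_pmf (\<lambda>y. (x, y)) (Q x))))"

definition marg_equiv ::
  "nat \<Rightarrow> nat \<Rightarrow> (nat \<Rightarrow> 'y pmf) \<Rightarrow> (nat \<Rightarrow> 'y list \<Rightarrow> real)
       \<Rightarrow> (nat \<Rightarrow> 'z pmf) \<Rightarrow> (nat \<Rightarrow> 'z list \<Rightarrow> real) \<Rightarrow> bool" where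
  "marg_equiv v n Q E Q' E' \<longleftrightarrow>
     (\<forall>P :: nat pmf. set_pmf P \<subseteq> {1..v} \<longrightarrow>
        (\<forall>x\<in>{1..v}. map_pmf (E x) (output_dist n P Q) = map_pmf (E' x) (output_dist n P Q')))"

end

theory Submission
  imports Defs
begin


lemma iid_map: "map_pmf (map f) (iid_list n p) = iid_list n (map_pmf f p)"
proof (induction n)
  case (Suc n)
  have "map_pmf (map f) (iid_list (Suc n) p) = bind_pmf p (\<lambda>a. map_pmf (Cons (f a)) (map_pmf (map f) (iid_list n p)))"
    by (simp add: map_bind_pmf map_pmf_comp)
  then show ?case by (simp add: Suc bind_map_pmf)
qed simp

lemma output_dist_eq: "output_dist n P Q = iid_list n (bind_pmf P Q)"
  unfolding output_dist_def iid_map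
  by (simp add: map_bind_pmf map_pmf_comp)

lemma map_bool_bernoulli:
  "map_pmf (\<lambda>a. a \<in> A) p = bernoulli_pmf (measure_pmf.prob p A)"
proof (rule pmf_eqI)
  fix b
  have "pmf (map_pmf (\<lambda>a. a \<in> A) p) b = measure_pmf.prob p ((\<lambda>a. a \<in> A) -` {b})"
    by (simp add: pmf_map)
  moreover have "(\<lambda>a. a \<in> A) -` {True} = A" "(\<lambda>a. a \<in> A) -` {False} = - A" by auto
  ultimately show "pmf (map_pmf (\<lambda>a. a \<in> A) p) b = pmf (bernoulli_pmf (measure_pmf.prob p A)) b"
    using measure_pmf.prob_compl[of A p] by (cases b) (simp_all add: Compl_eq_Diff_UNIV)
qed

lemma iid_count_binomial:
  "map_pmf (\<lambda>ys. length (filter (\<lambda>y. y \<in> A) ys)) (iid_list n p)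
     = binomial_pmf n (measure_pmf.prob p A)"
proof (induction n)
  case 0
  then show ?case by (simp add: binomial_pmf_0)
next
  case (Suc n)
  let ?q = "measure_pmf.prob p A"
  have q: "?q \<in> {0..1}" by simp
  have "map_pmf (\<lambda>ys. length (filter (\<lambda>y. y \<in> A) ys)) (iid_list (Suc n) p)
      = bind_pmf p (\<lambda>a. map_pmf (\<lambda>k. (if a \<in> A then 1 else 0) + k)
           (map_pmf (\<lambda>ys. length (filter (\<lambda>y. y \<in> A) ys)) (iid_list n p)))"
    by (simp add: map_bind_pmf map_pmf_comp cong: if_cong; intro bind_pmf_cong refl map_pmf_cong; simp)
  also have "\<dots> = bind_pmf (map_pmf (\<lambda>a. a \<in> A) p) (\<lambda>b. map_pmf (\<lambda>k. (if b then 1 else 0) + k)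
           (binomial_pmf n ?q))"
    by (simp add: Suc bind_map_pmf)
  also have "\<dots> = binomial_pmf (Suc n) ?q"
    unfolding map_bool_bernoulli binomial_pmf_Suc[OF q] map_pmf_def by simp
  finally show ?case .
qed



lemma bd_basic:
  assumes "block_design v b r k lam Y I"
  shows "finite Y" "card Y = b" "I \<subseteq> {1..v} \<times> Y" "v > k" "k > 0" "b > r" "r > lam"
    "\<And>x. x \<in> {1..v} \<Longrightarrow> card (inc_row I x) = r"
    "\<And>y. y \<in> Y \<Longrightarrow> card (inc_col I y) = k"
    "\<And>x x'. x \<in> {1..v} \<Longrightarrow> x' \<in> {1..v} \<Longrightarrow> x \<noteq> x' \<Longrightarrow> card (inc_row I x \<inter> inc_row I x') = lam"
    "\<And>x. inc_row I x \<subseteq> Y" "\<And>y. inc_col I y \<subseteq> {1..v}"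
  using assms unfolding block_design_def inc_row_def inc_col_def by blast+

lemma bd_count1:
  assumes "block_design v b r k lam Y I"
  shows "b * k = v * r"
proof -
  note B = bd_basic[OF assms]
  have fin: "finite I" using B(1,3) finite_subset by (metis finite_SigmaI finite_atLeastAtMost)
  have "I = Sigma {1..v} (inc_row I)" using B(3) unfolding inc_row_def by auto
  hence "card I = (\<Sum>x\<in>{1..v}. card (inc_row I x))"
    using B(1,11) by (metis card_SigmaI finite_atLeastAtMost finite_subset)
  also have "\<dots> = v * r" using B(8) by simp
  finally have 1: "card I = v * r" .
  have "I = (\<lambda>(y,x). (x,y)) ` Sigma Y (inc_col I)" using B(3) unfolding inc_col_def by force
  hence "card I = card (Sigma Y (inc_col I))"
    by (metis card_image[OF swap_inj_on])
  also have "\<dots> = (\<Sum>y\<in>Y. card (inc_col I y))"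
    using B(1,12) by (metis card_SigmaI finite_atLeastAtMost finite_subset)
  also have "\<dots> = b * k" using B(2,9) by simp
  finally show ?thesis using 1 by simp
qed

lemma bd_count2:
  assumes "block_design v b r k lam Y I"
  shows "lam * (v - 1) = r * (k - 1)"
proof -
  note B = bd_basic[OF assms]
  have finI: "\<And>x. finite (inc_row I x)" using B(1,11) finite_subset by blast
  have "v \<ge> 1" using B(4,5) by simp
  define x0 where "x0 = (1::nat)"
  have x0: "x0 \<in> {1..v}" using \<open>v \<ge> 1\<close> x0_def by simp
  define S where "S = Sigma ({1..v} - {x0}) (\<lambda>x'. inc_row I x0 \<inter> inc_row I x')"
  have "card S = (\<Sum>x'\<in>{1..v} - {x0}. card (inc_row I x0 \<inter> inc_row I x'))"
    unfolding S_def using finI by (intro card_SigmaI) auto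
  also have "\<dots> = (\<Sum>x'\<in>{1..v} - {x0}. lam)"
    using B(10)[OF x0] by (intro sum.cong) auto
  also have "\<dots> = lam * (v - 1)" using x0 by simp
  finally have 1: "card S = lam * (v - 1)" .
  have "S = (\<lambda>(y,x). (x,y)) ` Sigma (inc_row I x0) (\<lambda>y. inc_col I y - {x0})"
    unfolding S_def inc_col_def inc_row_def using B(3) by force
  hence "card S = card (Sigma (inc_row I x0) (\<lambda>y. inc_col I y - {x0}))"
    by (simp only: card_image[OF swap_inj_on])
  also have "\<dots> = (\<Sum>y\<in>inc_row I x0. card (inc_col I y - {x0}))"
    using finI B(12) by (intro card_SigmaI) (auto intro: finite_subset)
  also have "\<dots> = (\<Sum>y\<in>inc_row I x0. k - 1)"
  proof (intro sum.cong refl)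
    fix y assume y: "y \<in> inc_row I x0"
    hence "x0 \<in> inc_col I y" unfolding inc_row_def inc_col_def by simp
    moreover have "y \<in> Y" using y B(11) by blast
    ultimately show "card (inc_col I y - {x0}) = k - 1"
      using B(9) by (simp add: card_Diff_singleton_if)
  qed
  also have "\<dots> = r * (k - 1)" using B(8)[OF x0] by simp
  finally show ?thesis using 1 by simp
qed



definition bdC :: "nat \<Rightarrow> nat \<Rightarrow> nat \<Rightarrow> real \<Rightarrow> real" where
  "bdC b r lam eps = bd_alpha b r eps * (real lam * exp eps + real r - real lam)"
definition bdD :: "nat \<Rightarrow> nat \<Rightarrow> nat \<Rightarrow> real \<Rightarrow> real" where
  "bdD b r lam eps = bd_alpha b r eps * (real r - real lam) * (exp eps - 1)"

lemma alpha_pos: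
  assumes "block_design v b r k lam Y I"
  shows "bd_alpha b r eps > 0"
proof -
  have "b > r" using bd_basic[OF assms] by simp
  hence "real r * exp eps + real b - real r > 0"
    by (smt (verit) exp_gt_zero mult_nonneg_nonneg of_nat_0_le_iff of_nat_less_iff)
  thus ?thesis unfolding bd_alpha_def by simp
qed

lemma mech_pmf:
  assumes bd: "block_design v b r k lam Y I" and x: "x \<in> {1..v}"
  shows "pmf (bd_mech Y I b r eps x) y =
    (if y \<in> Y then (if (x, y) \<in> I then bd_alpha b r eps * exp eps else bd_alpha b r eps) else 0)"
proof -
  note B = bd_basic[OF bd]
  let ?a = "bd_alpha b r eps"
  let ?f = "\<lambda>y. if y \<in> Y then (if (x, y) \<in> I then ?a * exp eps else ?a) else 0"
  have a: "?a > 0" by (rule alpha_pos[OF bd])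
  have nn: "\<And>y. 0 \<le> ?f y" using a by simp
  have Yr: "Y \<inter> {y. (x, y) \<in> I} = inc_row I x" using B(11) unfolding inc_row_def by auto
  have Yr2: "card (Y \<inter> - {y. (x, y) \<in> I}) = b - r"
  proof -
    have "Y \<inter> - {y. (x, y) \<in> I} = Y - inc_row I x" unfolding inc_row_def by auto
    moreover have "card (Y - inc_row I x) = card Y - card (inc_row I x)"
      using B(1,11) by (meson card_Diff_subset finite_subset)
    ultimately show ?thesis using B(2,8) x by simp
  qed
  have "(\<Sum>y\<in>Y. ?f y) = (\<Sum>y\<in>Y. if (x, y) \<in> I then ?a * exp eps else ?a)"
    by (intro sum.cong) auto
  also have "\<dots> = ?a * exp eps * r + ?a * (b - r)"
    using B(1) Yr Yr2 B(8)[OF x] by (simp add: sum.If_cases)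
  also have "\<dots> = 1"
  proof -
    have "r < b" using B by simp
    hence "real (b - r) = real b - real r" by simp
    hence "?a * exp eps * r + ?a * (b - r) = ?a * (real r * exp eps + real b - real r)"
      by (simp add: algebra_simps)
    moreover have "real r * exp eps + real b - real r > 0"
      using \<open>r < b\<close> by (smt (verit) exp_gt_zero mult_nonneg_nonneg of_nat_0_le_iff of_nat_less_iff)
    ultimately show ?thesis unfolding bd_alpha_def by simp
  qed
  finally have s: "(\<Sum>y\<in>Y. ?f y) = 1" .
  have "(\<integral>\<^sup>+y. ennreal (?f y) \<partial>count_space UNIV) = (\<Sum>y\<in>Y. ennreal (?f y))"
    by (intro nn_integral_count_space') (use B(1) in auto)
  also have "\<dots> = ennreal (\<Sum>y\<in>Y. ?f y)" by (rule sum_ennreal) (rule nn)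
  also have "\<dots> = 1" using s by simp
  finally show ?thesis unfolding bd_mech_def by (subst pmf_embed_pmf) (use nn in auto)
qed



lemma bind_prob_gen:
  "measure_pmf.prob (bind_pmf P Q) A = (\<integral>x. measure_pmf.prob (Q x) A \<partial>measure_pmf P)"
proof -
  have m: "(\<lambda>x. measure_pmf (Q x)) \<in> measurable (measure_pmf P) (subprob_algebra (count_space UNIV))"
    by (auto simp: space_subprob_algebra intro!: measure_pmf.subprob_space_axioms)
  show ?thesis
    unfolding measure_pmf_bind using measure_pmf.measure_bind[OF m] by simp
qed

lemma mech_prob:
  assumes bd: "block_design v b r k lam Y I" and x: "x \<in> {1..v}" and x': "x' \<in> {1..v}"
  shows "measure_pmf.prob (bd_mech Y I b r eps x') (inc_row I x)
       = bdC b r lam eps + bdD b r lam eps * (if x' = x then 1 else 0)"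
proof -
  note B = bd_basic[OF bd]
  let ?a = "bd_alpha b r eps"
  have fin: "finite (inc_row I x)" using B(1,11) finite_subset by blast
  have "measure_pmf.prob (bd_mech Y I b r eps x') (inc_row I x)
      = (\<Sum>y\<in>inc_row I x. pmf (bd_mech Y I b r eps x') y)"
    by (rule measure_measure_pmf_finite[OF fin])
  also have "\<dots> = (\<Sum>y\<in>inc_row I x. if (x', y) \<in> I then ?a * exp eps else ?a)"
    using B(11) by (intro sum.cong refl) (auto simp: mech_pmf[OF bd x'])
  also have "\<dots> = ?a * exp eps * card (inc_row I x \<inter> inc_row I x')
                   + ?a * card (inc_row I x - inc_row I x')"
  proof -
    have "inc_row I x \<inter> {y. (x', y) \<in> I} = inc_row I x \<inter> inc_row I x'"
         "inc_row I x \<inter> - {y. (x', y) \<in> I} = inc_row I x - inc_row I x'"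
      unfolding inc_row_def by auto
    thus ?thesis using fin by (simp add: sum.If_cases)
  qed
  also have "\<dots> = bdC b r lam eps + bdD b r lam eps * (if x' = x then 1 else 0)"
  proof (cases "x' = x")
    case True
    thus ?thesis using B(8)[OF x] unfolding bdC_def bdD_def by (simp add: algebra_simps)
  next
    case False
    have c1: "card (inc_row I x \<inter> inc_row I x') = lam" using B(10)[OF x x'] False by simp
    have "card (inc_row I x - inc_row I x') = card (inc_row I x) - card (inc_row I x \<inter> inc_row I x')"
      using fin by (intro card_Diff_subset_Int) simp
    hence c2: "real (card (inc_row I x - inc_row I x')) = real r - real lam"
      using c1 B(8)[OF x] B(7) by simp
    show ?thesis using False unfolding bdC_def bdD_def c2 c1 by (simp add: algebra_simps)
  qed
  finally show ?thesis .
qed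

lemma bind_prob:
  assumes bd: "block_design v b r k lam Y I" and x: "x \<in> {1..v}" and P: "set_pmf P \<subseteq> {1..v}"
  shows "measure_pmf.prob (bind_pmf P (bd_mech Y I b r eps)) (inc_row I x)
       = bdC b r lam eps + bdD b r lam eps * pmf P x"
proof -
  have "measure_pmf.prob (bind_pmf P (bd_mech Y I b r eps)) (inc_row I x)
     = (\<integral>x'. bdC b r lam eps + bdD b r lam eps * indicator {x} x' \<partial>measure_pmf P)"
    unfolding bind_prob_gen
    by (intro integral_cong_AE) (use P mech_prob[OF bd x] in \<open>auto simp: AE_measure_pmf_iff indicator_def\<close>)
  also have "\<dots> = bdC b r lam eps + bdD b r lam eps * (\<integral>x'. indicator {x} x' \<partial>measure_pmf P)"
  proof -
    have i1: "integrable (measure_pmf P) (\<lambda>_. bdC b r lam eps)" by simp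
    have i2: "integrable (measure_pmf P) (\<lambda>x'. bdD b r lam eps * indicator {x} x')"
      by (intro integrable_mult_right measure_pmf.integrable_const_bound[where B=1]) auto
    show ?thesis using Bochner_Integration.integral_add[OF i1 i2] by simp
  qed
  also have "\<dots> = bdC b r lam eps + bdD b r lam eps * pmf P x"
    by (simp add: measure_pmf_single)
  finally show ?thesis .
qed

lemma est_dist:
  assumes bd: "block_design v b r k lam Y I" and x: "x \<in> {1..v}" and P: "set_pmf P \<subseteq> {1..v}"
    and n: "n \<ge> 1"
  shows "map_pmf (bd_est I b r lam eps n x) (output_dist n P (bd_mech Y I b r eps))
     = map_pmf (\<lambda>j. (real j / real n - bdC b r lam eps) / bdD b r lam eps)
         (binomial_pmf n (bdC b r lam eps + bdD b r lam eps * pmf P x))"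
proof -
  have a: "bd_alpha b r eps > 0" by (rule alpha_pos[OF bd])
  have e: "bd_est I b r lam eps n x = (\<lambda>ys. (real (length (filter (\<lambda>y. y \<in> inc_row I x) ys)) / real n
            - bdC b r lam eps) / bdD b r lam eps)"
    unfolding bd_est_def bdC_def bdD_def using a n
    by (intro ext) (simp add: field_simps)
  have "map_pmf (bd_est I b r lam eps n x) (output_dist n P (bd_mech Y I b r eps))
    = map_pmf (\<lambda>j. (real j / real n - bdC b r lam eps) / bdD b r lam eps)
       (map_pmf (\<lambda>ys. length (filter (\<lambda>y. y \<in> inc_row I x) ys)) (iid_list n (bind_pmf P (bd_mech Y I b r eps))))"
    unfolding e output_dist_eq map_pmf_comp by (simp add: o_def)
  also have "\<dots> = map_pmf (\<lambda>j. (real j / real n - bdC b r lam eps) / bdD b r lam eps)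
         (binomial_pmf n (bdC b r lam eps + bdD b r lam eps * pmf P x))"
    unfolding iid_count_binomial bind_prob[OF bd x P] ..
  finally show ?thesis .
qed



lemma bd_real_ids:
  assumes bd: "block_design v b r k lam Y I"
  shows "real b = real v * real r / real k" "real lam = real r * (real k - 1) / (real v - 1)"
    "real v > real k" "real k > 0" "real v - 1 > 0"
proof -
  note B = bd_basic[OF bd]
  have 1: "real b * real k = real v * real r" using bd_count1[OF bd] by (metis of_nat_mult)
  have 2: "real lam * (real v - 1) = real r * (real k - 1)"
  proof -
    have "real (lam * (v - 1)) = real (r * (k - 1))" using bd_count2[OF bd] by simp
    moreover have "real (k - 1) = real k - 1" "real (v - 1) = real v - 1" using B(4,5) by auto
    ultimately show ?thesis by (simp only: of_nat_mult)
  qed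
  show "real v > real k" "real k > 0" using B by auto
  show "real v - 1 > 0" using B by auto
  show "real b = real v * real r / real k" using 1 B(5) by (simp add: field_simps)
  show "real lam = real r * (real k - 1) / (real v - 1)" using 2 \<open>real v - 1 > 0\<close> by (simp add: field_simps)
qed


lemma alg_l1:
  fixes L r k v e :: real
  assumes "v - 1 \<noteq> 0" "L = r * (k - 1) / (v - 1)"
  shows "L * e + r - L = r * ((k - 1) * (e - 1) + v - 1) / (v - 1)"
proof -
  have h: "L * (v - 1) = r * (k - 1)" using assms by simp
  have "(L * e + r - L) * (v - 1) = e * (L * (v - 1)) + r * (v - 1) - L * (v - 1)"
    by (simp add: algebra_simps)
  also have "\<dots> = r * ((k - 1) * (e - 1) + v - 1)" unfolding h by (simp add: algebra_simps)
  finally have "(L * e + r - L) * (v - 1) = r * ((k - 1) * (e - 1) + v - 1)" .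
  thus ?thesis using assms(1) by (simp add: eq_divide_eq)
qed

lemma alg_l2:
  fixes L r k v :: real
  assumes "v - 1 \<noteq> 0" "L = r * (k - 1) / (v - 1)"
  shows "r - L = r * (v - k) / (v - 1)"
proof -
  have h: "L * (v - 1) = r * (k - 1)" using assms by simp
  have "(r - L) * (v - 1) = r * (v - 1) - L * (v - 1)"
    by (simp add: algebra_simps)
  also have "\<dots> = r * (v - k)" unfolding h by (simp add: algebra_simps)
  finally have "(r - L) * (v - 1) = r * (v - k)" .
  thus ?thesis using assms(1) by (simp add: eq_divide_eq)
qed

lemma closed_forms:
  assumes bd: "block_design v b r k lam Y I"
  shows "bdC b r lam eps = real k * ((real k - 1) * (exp eps - 1) + real v - 1)
            / ((real v - 1) * (real k * (exp eps - 1) + real v))"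
    "bdD b r lam eps = real k * (exp eps - 1) * (real v - real k)
            / ((real v - 1) * (real k * (exp eps - 1) + real v))"
proof -
  note R = bd_real_ids[OF bd]
  define e where "e = exp eps"
  define w where "w = real k * (e - 1) + real v"
  have rp: "real r > 0" using bd_basic[OF bd] by simp
  have "real k * e > 0" unfolding e_def using R(4) by simp
  hence w: "w > 0" unfolding w_def using R(3) by (simp add: algebra_simps)
  have k0: "real k \<noteq> 0" "real v - 1 \<noteq> 0" using R(4,5) by auto
  have den: "real r * e + real b - real r = real r * w / real k"
    unfolding R(1) w_def using k0 by (simp add: field_simps)
  have al: "bd_alpha b r eps = real k / (real r * w)"
    unfolding bd_alpha_def e_def[symmetric] den by simp
  have l1: "real lam * e + real r - real lam = real r * ((real k - 1) * (e - 1) + real v - 1) / (real v - 1)"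
    by (rule alg_l1[OF k0(2) R(2)])
  have l2: "real r - real lam = real r * (real v - real k) / (real v - 1)"
    by (rule alg_l2[OF k0(2) R(2)])
  show "bdC b r lam eps = real k * ((real k - 1) * (exp eps - 1) + real v - 1)
            / ((real v - 1) * (real k * (exp eps - 1) + real v))"
    unfolding bdC_def al e_def[symmetric] w_def[symmetric] l1 using rp w by simp
  show "bdD b r lam eps = real k * (exp eps - 1) * (real v - real k)
            / ((real v - 1) * (real k * (exp eps - 1) + real v))"
    unfolding bdD_def al e_def[symmetric] w_def[symmetric] l2 using rp w by (simp add: mult_ac)
qed



lemma D_pos:
  assumes bd: "block_design v b r k lam Y I" and eps: "eps > 0"
  shows "bdD b r lam eps > 0"
proof -
  have "bd_alpha b r eps > 0" by (rule alpha_pos[OF bd])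
  moreover have "real r - real lam > 0" using bd_basic[OF bd] by simp
  moreover have "exp eps - 1 > 0" using eps by simp
  ultimately show ?thesis unfolding bdD_def by simp
qed

lemma C_nonneg:
  assumes bd: "block_design v b r k lam Y I"
  shows "bdC b r lam eps \<ge> 0"
proof -
  have "bd_alpha b r eps > 0" by (rule alpha_pos[OF bd])
  moreover have "real lam * exp eps + real r - real lam \<ge> 0"
  proof -
    have "real lam * exp eps \<ge> 0" "real r > real lam" using bd_basic[OF bd] by auto
    thus ?thesis by linarith
  qed
  ultimately show ?thesis unfolding bdC_def by simp
qed

lemma CD_lt1:
  assumes bd: "block_design v b r k lam Y I"
  shows "bdC b r lam eps + bdD b r lam eps < 1"
proof -
  have "bdC b r lam eps + bdD b r lam eps = bd_alpha b r eps * (real r * exp eps)"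
    unfolding bdC_def bdD_def by (simp add: algebra_simps)
  also have "\<dots> = real r * exp eps / (real r * exp eps + (real b - real r))"
    unfolding bd_alpha_def by (simp add: algebra_simps)
  also have "\<dots> < 1"
  proof -
    have "real b - real r > 0" using bd_basic[OF bd] by simp
    moreover have "real r * exp eps \<ge> 0" by simp
    ultimately have "real r * exp eps + (real b - real r) > 0" "real r * exp eps < real r * exp eps + (real b - real r)" by linarith+
    thus ?thesis by (simp add: divide_less_eq)
  qed
  finally show ?thesis .
qed

lemma frac_ratio:
  fixes k X V w a vk :: real
  assumes "k \<noteq> 0" "V \<noteq> 0" "w \<noteq> 0" "a \<noteq> 0" "vk \<noteq> 0"
  shows "(k * X / (V * w)) / (k * a * vk / (V * w)) = X / (a * vk)"
  using assms by (simp add: field_simps)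

lemma ratio:
  assumes bd: "block_design v b r k lam Y I" and eps: "eps > 0"
  shows "bdC b r lam eps / bdD b r lam eps
       = ((real k - 1) * (exp eps - 1) + real v - 1) / ((exp eps - 1) * (real v - real k))"
proof -
  note R = bd_real_ids[OF bd]
  have w: "real k * (exp eps - 1) + real v > 0" using R(3,4) eps
    by (simp add: add_nonneg_pos)
  have "exp eps - 1 > 0" using eps by simp
  thus ?thesis unfolding closed_forms[OF bd] using w R(3,4,5) by (intro frac_ratio) auto
qed

lemma ratio_inj:
  fixes k k' v a :: real
  assumes "a > 0" "v - k > 0" "v - k' > 0" "v - 1 > 0"
    and "((k - 1) * a + v - 1) / (a * (v - k)) = ((k' - 1) * a + v - 1) / (a * (v - k'))"
  shows "k = k'"
proof -
  have "((k - 1) * a + v - 1) * (a * (v - k')) = ((k' - 1) * a + v - 1) * (a * (v - k))"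
  proof -
    have "a * (v - k) \<noteq> 0" "a * (v - k') \<noteq> 0" using assms(1-3) by auto
    thus ?thesis using assms(5) frac_eq_eq by blast
  qed
  moreover have "((k - 1) * a + v - 1) * (a * (v - k')) - ((k' - 1) * a + v - 1) * (a * (v - k))
     = a * ((k - k') * (v - 1) * (a + 1))" by algebra
  ultimately have "a * ((k - k') * (v - 1) * (a + 1)) = 0" by linarith
  moreover have "a + 1 \<noteq> 0" "a \<noteq> 0" "v - 1 \<noteq> 0" using assms(1,4) by auto
  ultimately show ?thesis by (simp del: mult_eq_0_iff)
qed

lemma lower:
  assumes "D > 0" "z \<in> set_pmf (map_pmf (\<lambda>j. (real j / real n - C) / D) M)"
  shows "z \<ge> - C / D"
proof -
  obtain j where z: "z = (real j / real n - C) / D" using assms(2) by auto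
  have "real j / real n - C \<ge> - C" by simp
  hence "(- C) / D \<le> (real j / real n - C) / D" using assms(1) by (intro divide_right_mono) auto
  thus ?thesis using z by simp
qed



theorem theorem2:
  fixes v n b r k lam b' r' k' lam' :: nat and eps :: real
    and Y :: "'y set" and I :: "(nat \<times> 'y) set"
    and Y' :: "'z set" and I' :: "(nat \<times> 'z) set"
  assumes "v \<ge> 2" and "n \<ge> 1" and "eps > 0"
    and "block_design v b r k lam Y I"
    and "block_design v b' r' k' lam' Y' I'"
  shows "marg_equiv v n (bd_mech Y I b r eps) (bd_est I b r lam eps n)
                        (bd_mech Y' I' b' r' eps) (bd_est I' b' r' lam' eps n)
         \<longleftrightarrow> k = k'"
proof
  assume k: "k = k'"
  have C: "bdC b r lam eps = bdC b' r' lam' eps" "bdD b r lam eps = bdD b' r' lam' eps"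
    using closed_forms[OF assms(4)] closed_forms[OF assms(5)] k by simp_all
  show "marg_equiv v n (bd_mech Y I b r eps) (bd_est I b r lam eps n)
                        (bd_mech Y' I' b' r' eps) (bd_est I' b' r' lam' eps n)"
    unfolding marg_equiv_def
    using est_dist[OF assms(4) _ _ assms(2)] est_dist[OF assms(5) _ _ assms(2)] C by simp
next
  assume me: "marg_equiv v n (bd_mech Y I b r eps) (bd_est I b r lam eps n)
                        (bd_mech Y' I' b' r' eps) (bd_est I' b' r' lam' eps n)"
  let ?P = "return_pmf (1::nat)"
  have P: "set_pmf ?P \<subseteq> {1..v}" and x: "(1::nat) \<in> {1..v}" using assms(1) by auto
  define C where "C = bdC b r lam eps"
  define D where "D = bdD b r lam eps"
  define C' where "C' = bdC b' r' lam' eps"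
  define D' where "D' = bdD b' r' lam' eps"
  have D: "D > 0" "D' > 0" unfolding D_def D'_def using D_pos assms(3,4,5) by blast+
  define M where "M = map_pmf (\<lambda>j. (real j / real n - C) / D) (binomial_pmf n (C + D))"
  define M' where "M' = map_pmf (\<lambda>j. (real j / real n - C') / D') (binomial_pmf n (C' + D'))"
  have eq: "M = M'"
    using me[unfolded marg_equiv_def, rule_format, OF P x]
    unfolding est_dist[OF assms(4) x P assms(2)] est_dist[OF assms(5) x P assms(2)]
      M_def M'_def C_def D_def C'_def D'_def by simp
  have z1: "- C / D \<in> set_pmf M"
  proof -
    have "C + D \<in> {0..1}" "C + D \<noteq> 1" using C_nonneg[OF assms(4), of eps] CD_lt1[OF assms(4), of eps] D
      unfolding C_def D_def by auto
    hence "0 \<in> set_pmf (binomial_pmf n (C + D))" by (simp add: set_pmf_binomial_eq)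
    thus ?thesis unfolding M_def by force
  qed
  have z2: "- C' / D' \<in> set_pmf M'"
  proof -
    have "C' + D' \<in> {0..1}" "C' + D' \<noteq> 1" using C_nonneg[OF assms(5), of eps] CD_lt1[OF assms(5), of eps] D
      unfolding C'_def D'_def by auto
    hence "0 \<in> set_pmf (binomial_pmf n (C' + D'))" by (simp add: set_pmf_binomial_eq)
    thus ?thesis unfolding M'_def by force
  qed
  have "- C / D \<ge> - C' / D'" using lower[OF D(2)] z1 eq unfolding M'_def by blast
  moreover have "- C' / D' \<ge> - C / D" using lower[OF D(1)] z2 eq unfolding M_def by blast
  ultimately have "C / D = C' / D'" by (simp only: minus_divide_left[symmetric])
  hence "((real k - 1) * (exp eps - 1) + real v - 1) / ((exp eps - 1) * (real v - real k))
       = ((real k' - 1) * (exp eps - 1) + real v - 1) / ((exp eps - 1) * (real v - real k'))"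
    unfolding C_def D_def C'_def D'_def ratio[OF assms(4,3)] ratio[OF assms(5,3)] .
  moreover have "exp eps - 1 > 0" using assms(3) by simp
  moreover have "real v - real k > 0" using bd_real_ids[OF assms(4)] by simp
  moreover have "real v - real k' > 0" using bd_real_ids[OF assms(5)] by simp
  moreover have "real v - 1 > 0" using bd_real_ids[OF assms(5)] by simp
  ultimately have "real k = real k'"
    by (intro ratio_inj[of "exp eps - 1" "real v" "real k" "real k'"])
  thus "k = k'" by simp
qed

end
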